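(* Let $\mathscr{C}\subseteq\mathbb{F}_2^{n}$ be a binary linear block code of length $n$ and dimension $k$, with no idle bits and with minimum distance $d_{\min}\ge 2$. Fix $p\in[0,1]$. For each position $j\in\{1,\dots,n\}$, let $E_j\subseteq\{1,\dots,n\}\setminus\{j\}$ be a random set of erased positions, each position $\ell\neq j$ belonging to $E_j$ independently with probability $p$, and let $S_j=\{1,\dots,n\}\setminus(E_j\cup\{j\})$ be the set of non-erased positions other than $j$. Say that position $j$ is recoverable by (extrinsic) MAP erasure decoding if for all $c,c'\in\mathscr{C}$ with $c_\ell=c'_\ell$ for all $\ell\in S_j$ one has $c_j=c'_j$. Let $q$ be the probability that position $j$ is not recoverable, averaged uniformly over $j\in\{1,\dots,n\}$. Then $$q=\frac{1}{n}\sum_{t=0}^{n-1}p^{t}(1-p)^{n-1-t}\Big[(n-t)\,\tilde e_{n-t}-(t+1)\,\tilde e_{n-1-t}\Big],$$ where $\tilde e_g$ is the $g$th un-normalized information function of $\mathscr{C}$.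
   Context: A coordinate of a linear code is an idle bit if it equals $0$ in every codeword (equivalently, the corresponding column of a generator matrix is zero). Let $\mathbf{G}$ be a $k\times n$ generator matrix of $\mathscr{C}$. For $0\le g\le n$, the $g$th un-normalized information function of $\mathscr{C}$ is $\tilde e_g=\sum_{T}\mathrm{rank}(\mathbf{G}_T)$, where the sum runs over all $\binom{n}{g}$ subsets $T\subseteq\{1,\dots,n\}$ of size $g$ and $\mathbf{G}_T$ is the $k\times g$ submatrix of $\mathbf{G}$ formed by the columns indexed by $T$ (with $\mathrm{rank}$ of an empty matrix equal to $0$, so $\tilde e_0=0$); it does not depend on the choice of generator matrix. *)

theory Defs
  imports "HOL-Library.Z2" "HOL-Probability.Product_PMF"
    "Jordan_Normal_Form.DL_Rank" "Jordan_Normal_Form.DL_Submatrix"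
begin

text \<open>Binary vectors are \<open>bit vec\<close> (\<open>bit\<close> is the field F_2); positions are 0,...,n-1.\<close>

definition generator_matrix :: "bit mat \<Rightarrow> nat \<Rightarrow> nat \<Rightarrow> bit vec set \<Rightarrow> bool" where
  "generator_matrix G k n C \<longleftrightarrow>
     G \<in> carrier_mat k n \<and> vec_space.rank k G = k \<and>
     C = {transpose_mat G *\<^sub>v u | u. u \<in> carrier_vec k}"

definition info_fun :: "bit mat \<Rightarrow> nat \<Rightarrow> nat" where
  "info_fun G g = (\<Sum>T\<in>{T. T \<subseteq> {0..<dim_col G} \<and> card T = g}.
                     vec_space.rank (dim_row G) (submatrix G UNIV T))"

definition no_idle_bits :: "bit vec set \<Rightarrow> nat \<Rightarrow> bool" where
  "no_idle_bits C n \<longleftrightarrow> (\<forall>j<n. \<exists>c\<in>C. c $ j \<noteq> 0)"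

definition hamming_weight :: "nat \<Rightarrow> bit vec \<Rightarrow> nat" where
  "hamming_weight n c = card {i. i < n \<and> c $ i \<noteq> 0}"

definition min_dist_ge :: "bit vec set \<Rightarrow> nat \<Rightarrow> nat \<Rightarrow> bool" where
  "min_dist_ge C n d \<longleftrightarrow>
     (\<forall>c\<in>C. \<forall>c'\<in>C. c \<noteq> c' \<longrightarrow> hamming_weight n (c - c') \<ge> d)"

definition recoverable :: "bit vec set \<Rightarrow> nat set \<Rightarrow> nat \<Rightarrow> bool" where
  "recoverable C S j \<longleftrightarrow>
     (\<forall>c\<in>C. \<forall>c'\<in>C. (\<forall>l\<in>S. c $ l = c' $ l) \<longrightarrow> c $ j = c' $ j)"

text \<open>Erasure pattern for position j: each l \<noteq> j (l < n) is erased independently with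
  probability p; the random set E_j is {l. f l}.\<close>
definition erasure_pmf :: "nat \<Rightarrow> nat \<Rightarrow> real \<Rightarrow> (nat \<Rightarrow> bool) pmf" where
  "erasure_pmf n j p = Pi_pmf ({0..<n} - {j}) False (\<lambda>_. bernoulli_pmf p)"

definition nonrec_prob :: "bit vec set \<Rightarrow> nat \<Rightarrow> real \<Rightarrow> real" where
  "nonrec_prob C n p = (1 / real n) * (\<Sum>j<n.
      measure_pmf.prob (erasure_pmf n j p)
        {f. \<not> recoverable C ({0..<n} - ({l. f l} \<union> {j})) j})"

end

theory Submission
  imports Defs
begin


context vec_space
begin

lemma max_indep_of_span:
  assumes "lin_indpt B" "B \<subseteq> X" "X \<subseteq> span B" "X \<subseteq> carrier_vec n"
  shows "maximal B (\<lambda>T. T \<subseteq> X \<and> lin_indpt T)"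
  unfolding maximal_def
proof (intro conjI allI impI)
  show "B \<subseteq> X" using assms by auto
  show "lin_indpt B" using assms by auto
  fix T assume T: "B \<subseteq> T \<and> T \<subseteq> X \<and> lin_indpt T"
  show "T = B"
  proof (rule ccontr)
    assume "T \<noteq> B"
    then obtain x where x: "x \<in> T" "x \<notin> B" using T by blast
    have Bc: "B \<subseteq> carrier_vec n" using assms by auto
    have xc: "x \<in> carrier_vec n" using x T assms by auto
    have "x \<in> span B" using x T assms by auto
    then have "lin_dep (B \<union> {x})" using lin_dep_iff_in_span[OF _ assms(1) _ x(2)] Bc xc by auto
    moreover have "B \<union> {x} \<subseteq> T" using x T by auto
    ultimately have "lin_dep T" using supset_ld_is_ld by blast
    then show False using T by auto
  qed
qed

lemma max_indep_exists:
  assumes "finite A" "A \<subseteq> carrier_vec n"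
  obtains B where "lin_indpt B" "B \<subseteq> A" "A \<subseteq> span B"
proof -
  have "lin_indpt {}"
    by (metis (no_types) empty_subsetI fin_dim finite_basis_exists subset_li_is_li vec_vs vectorspace.basis_def)
  then obtain B where B: "finite B" "maximal B (\<lambda>T. T \<subseteq> A \<and> lin_indpt T)"
    using maximal_exists[of "\<lambda>T. T \<subseteq> A \<and> lin_indpt T" "card A" "{}"] assms
    by (meson card_mono empty_subsetI rev_finite_subset)
  have Bi: "lin_indpt B" "B \<subseteq> A" using B unfolding maximal_def by auto
  have Bc: "B \<subseteq> carrier_vec n" using Bi assms by auto
  have "A \<subseteq> span B"
  proof
    fix a assume a: "a \<in> A"
    show "a \<in> span B"
    proof (cases "a \<in> B")
      case True then show ?thesis using in_own_span[OF Bc] by auto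
    next
      case False
      show ?thesis
      proof (rule ccontr)
        assume "a \<notin> span B"
        then have "lin_indpt (B \<union> {a})"
          using lin_dep_iff_in_span[OF Bc Bi(1) _ False] a assms by auto
        then have "B \<union> {a} = B" using B(2) a Bi unfolding maximal_def by auto
        then show False using False by auto
      qed
    qed
  qed
  then show ?thesis using that Bi by auto
qed

lemma duality:
  assumes A: "finite A" "A \<subseteq> carrier_vec n" and v: "v \<in> carrier_vec n" "v \<notin> span A"
  shows "\<exists>w\<in>carrier_vec n. (\<forall>a\<in>A. a \<bullet> w = 0) \<and> v \<bullet> w = 1"
proof -
  obtain B0 where B0: "lin_indpt B0" "B0 \<subseteq> A" "A \<subseteq> span B0"
    using max_indep_exists[OF A] by blast
  have B0c: "B0 \<subseteq> carrier_vec n" using B0 A by auto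
  have vB0: "v \<notin> span B0" using span_is_monotone[OF B0(2)] v by auto
  have vnB0: "v \<notin> B0" using vB0 in_own_span[OF B0c] by auto
  have B1: "lin_indpt (B0 \<union> {v})"
    using lin_dep_iff_in_span[OF B0c B0(1) v(1) vnB0] vB0 by auto
  define P where "P = (\<lambda>T. B0 \<union> {v} \<subseteq> T \<and> T \<subseteq> carrier_vec n \<and> lin_indpt T)"
  have PB: "P (B0 \<union> {v})" unfolding P_def using B1 B0c v by auto
  have "finite T \<and> card T \<le> n" if "P T" for T
  proof -
    have "T \<subseteq> carrier V" "lin_indpt T" using that unfolding P_def by auto
    then show ?thesis using li_le_dim[OF fin_dim] dim_is_n by simp
  qed
  then obtain B2 where B2: "finite B2" "maximal B2 P"
    using maximal_exists[of P n "B0 \<union> {v}", OF _ PB] by blast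
  have PB2: "P B2" using B2(2) unfolding maximal_def by blast
  have B2P: "B0 \<union> {v} \<subseteq> B2" "B2 \<subseteq> carrier_vec n" "lin_indpt B2"
    using PB2 unfolding P_def by simp_all
  have "maximal B2 (\<lambda>S. S \<subseteq> carrier V \<and> lin_indpt S)"
    unfolding maximal_def
  proof (intro conjI allI impI)
    show "B2 \<subseteq> carrier V" using B2P by simp
    show "lin_indpt B2" using B2P by simp
    fix B assume B: "B2 \<subseteq> B \<and> B \<subseteq> carrier V \<and> lin_indpt B"
    then have "P B" unfolding P_def using B2P(1) by auto
    then show "B = B2" using B2(2) B unfolding maximal_def by blast
  qed
  then have "basis B2" by (simp add: max_li_is_basis)
  then have cardB2: "card B2 = n" using dim_basis[OF B2(1)] dim_is_n by auto
  obtain bs where bs: "set bs = B2" "distinct bs" using finite_distinct_list[OF B2(1)] by blast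
  have lbs: "length bs = n" using bs cardB2 distinct_card by fastforce
  define M where "M = mat_of_cols n bs"
  have Mc: "M \<in> carrier_mat n n" unfolding M_def using lbs by auto
  have colsM: "cols M = bs" unfolding M_def using bs B2P by auto
  have "rank M = n" using lin_indpt_full_rank[OF Mc] colsM bs B2P by auto
  then have "det M \<noteq> 0" using det_rank_iff[OF Mc] by auto
  then have dT: "det (transpose_mat M) \<noteq> 0" using det_transpose[OF Mc] by auto
  have MTc: "transpose_mat M \<in> carrier_mat n n" using Mc by auto
  from det_non_zero_imp_unit[OF MTc dT, of undefined]
  obtain Mi where Mi: "Mi \<in> carrier_mat n n" "transpose_mat M * Mi = 1\<^sub>m n"
    using det_non_zero_imp_unit[OF MTc dT, of "()"] unfolding Units_def by (auto simp: ring_mat_simps)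
  have "v \<in> set bs" using bs B2P(1) by auto
  then obtain i where i: "i < n" "bs ! i = v" using lbs by (auto simp: in_set_conv_nth)
  define w where "w = Mi *\<^sub>v unit_vec n i"
  have wc: "w \<in> carrier_vec n" unfolding w_def using Mi by auto
  have "transpose_mat M *\<^sub>v w = unit_vec n i"
    unfolding w_def using assoc_mult_mat_vec[OF MTc Mi(1), of "unit_vec n i"] Mi by auto
  then have key: "bs ! j \<bullet> w = (if j = i then 1 else 0)" if "j < n" for j
  proof -
    have "(transpose_mat M *\<^sub>v w) $ j = row (transpose_mat M) j \<bullet> w" using that Mc by auto
    also have "row (transpose_mat M) j = col M j" using that Mc by auto
    also have "col M j = bs ! j" using colsM Mc that by (metis cols_nth carrier_matD(2))
    finally show ?thesis using \<open>transpose_mat M *\<^sub>v w = unit_vec n i\<close> that i by auto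
  qed
  have vw: "v \<bullet> w = 1" using key[OF i(1)] i by auto
  have "w \<in> orthogonal_complement B0"
    unfolding orthogonal_complement_def
  proof (intro CollectI conjI ballI wc)
    fix y assume y: "y \<in> B0"
    then have "y \<in> set bs" using bs B2P(1) by auto
    then obtain j where j: "j < n" "bs ! j = y" using lbs by (auto simp: in_set_conv_nth)
    have "j \<noteq> i" using j i y vnB0 by auto
    then have "y \<bullet> w = 0" using key[OF j(1)] j by auto
    then show "w \<bullet> y = 0" using comm_scalar_prod[OF wc] y B0c by auto
  qed
  then have "w \<in> orthogonal_complement (span B0)" using in_orthogonal_complement_span[OF B0c] by auto
  then have "\<forall>a\<in>A. a \<bullet> w = 0"
  proof (intro ballI)
    fix a assume a: "a \<in> A"
    then have "a \<in> span B0" "a \<in> carrier_vec n" using B0 A by auto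
    then show "a \<bullet> w = 0" using \<open>w \<in> orthogonal_complement (span B0)\<close> comm_scalar_prod[OF _ wc]
      unfolding orthogonal_complement_def by auto
  qed
  then show ?thesis using wc vw by auto
qed


lemma dim_span_insert:
  assumes A: "finite A" "A \<subseteq> carrier_vec n" and v: "v \<in> carrier_vec n"
  shows "vectorspace.dim class_ring (span_vs (insert v A)) =
         vectorspace.dim class_ring (span_vs A) + (if v \<in> span A then 0 else 1)"
proof -
  obtain B0 where B0: "lin_indpt B0" "B0 \<subseteq> A" "A \<subseteq> span B0"
    using max_indep_exists[OF A] by blast
  have fB0: "finite B0" using B0(2) A(1) by (rule finite_subset)
  have B0c: "B0 \<subseteq> carrier_vec n" using B0 A by auto
  have dA: "vectorspace.dim class_ring (span_vs A) = card B0"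
    using dim_span[OF A(2) A(1) max_indep_of_span[OF B0 A(2)]] .
  have Ac: "insert v A \<subseteq> carrier_vec n" using A v by auto
  have spA: "span A \<subseteq> span B0" using span_is_subset[OF B0(3) span_is_submodule[OF B0c]] .
  show ?thesis
  proof (cases "v \<in> span A")
    case True
    have "insert v A \<subseteq> span B0" using True spA B0 by auto
    then have "maximal B0 (\<lambda>T. T \<subseteq> insert v A \<and> lin_indpt T)"
      using max_indep_of_span[OF B0(1) _ _ Ac] B0 by auto
    then show ?thesis using dim_span[OF Ac _] A dA True by auto
  next
    case False
    have vB0: "v \<notin> span B0" using span_is_monotone[OF B0(2)] False by auto
    have vnB0: "v \<notin> B0" using vB0 in_own_span[OF B0c] by auto
    have B1: "lin_indpt (B0 \<union> {v})"
      using lin_dep_iff_in_span[OF B0c B0(1) v vnB0] vB0 by auto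
    have B1c: "B0 \<union> {v} \<subseteq> carrier_vec n" using B0c v by auto
    have "span B0 \<subseteq> span (B0 \<union> {v})" by (rule span_is_monotone) auto
    moreover have "v \<in> span (B0 \<union> {v})" using in_own_span[OF B1c] by auto
    ultimately have "insert v A \<subseteq> span (B0 \<union> {v})" using B0 by auto
    then have "maximal (B0 \<union> {v}) (\<lambda>T. T \<subseteq> insert v A \<and> lin_indpt T)"
      using max_indep_of_span[OF B1 _ _ Ac] B0 by auto
    then have "vectorspace.dim class_ring (span_vs (insert v A)) = card (B0 \<union> {v})"
      using dim_span[OF Ac] A by auto
    then show ?thesis using dA False fB0 vnB0 by auto
  qed
qed

end

lemma col_submatrix_UNIV:
  assumes "j < card {j. j < dim_col A \<and> j \<in> J}"
  shows "col (submatrix A UNIV J) j = col A (pick J j)"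
proof (rule eq_vecI)
  show "dim_vec (col (submatrix A UNIV J) j) = dim_vec (col A (pick J j))"
    by (simp add: dim_submatrix)
  fix i assume "i < dim_vec (col A (pick J j))"
  then have i: "i < dim_row A" by simp
  then have i': "i < card {i. i < dim_row A \<and> i \<in> UNIV}" by simp
  have j': "j < dim_col (submatrix A UNIV J)" using assms by (simp add: dim_submatrix)
  have "i < dim_row (submatrix A UNIV J)" using i by (simp add: dim_submatrix)
  then show "col (submatrix A UNIV J) j $ i = col A (pick J j) $ i"
    using submatrix_index[OF i' assms] pick_le[OF assms] i j' pick_UNIV by simp
qed

lemma set_cols_submatrix_UNIV:
  assumes "J \<subseteq> {0..<dim_col A}"
  shows "set (cols (submatrix A UNIV J)) = col A ` J"
proof -
  have cJ: "{j. j < dim_col A \<and> j \<in> J} = J" using assms by auto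
  have fJ: "finite J" using assms finite_subset by blast
  have "set (cols (submatrix A UNIV J)) = (\<lambda>j. col (submatrix A UNIV J) j) ` {..<card J}"
    by (auto simp: cols_def dim_submatrix cJ)
  also have "\<dots> = (\<lambda>j. col A (pick J j)) ` {..<card J}"
    using col_submatrix_UNIV[where A=A and J=J] cJ by auto
  also have "\<dots> = col A ` (pick J ` {..<card J})" by auto
  also have "pick J ` {..<card J} = J"
  proof
    show "pick J ` {..<card J} \<subseteq> J" using pick_in_set by auto
    show "J \<subseteq> pick J ` {..<card J}"
    proof
      fix i assume i: "i \<in> J"
      have "{a\<in>J. a < i} \<subset> J" using i by auto
      then have "card {a\<in>J. a < i} < card J" using fJ psubset_card_mono by blast
      then show "i \<in> pick J ` {..<card J}" using pick_card_in_set[OF i] by force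
    qed
  qed
  finally show ?thesis .
qed


lemma rank_insert_recoverable:
  fixes G :: "bit mat"
  assumes G: "G \<in> carrier_mat k n" and C: "C = {transpose_mat G *\<^sub>v u | u. u \<in> carrier_vec k}"
    and S: "S \<subseteq> {0..<n}" and j: "j < n"
  shows "vec_space.rank k (submatrix G UNIV (insert j S)) =
         vec_space.rank k (submatrix G UNIV S) + (if recoverable C S j then 0 else 1)"
proof -
  interpret vec_space "TYPE(bit)" k .
  have dc: "dim_col G = n" using G by auto
  have colc: "col G l \<in> carrier_vec k" for l using G by auto
  have Sc: "col G ` S \<subseteq> carrier_vec k" using colc by auto
  have fS: "finite (col G ` S)" using S finite_subset by blast
  have r1: "rank (submatrix G UNIV S) = vectorspace.dim class_ring (span_vs (col G ` S))"
    unfolding rank_def using set_cols_submatrix_UNIV[of S G] S dc by auto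
  have r2: "rank (submatrix G UNIV (insert j S)) = vectorspace.dim class_ring (span_vs (insert (col G j) (col G ` S)))"
    unfolding rank_def using set_cols_submatrix_UNIV[of "insert j S" G] S dc j by auto
  have entry: "(transpose_mat G *\<^sub>v u) $ l = col G l \<bullet> u" if "l < n" for u l
    using that G by auto
  have rec: "recoverable C S j \<longleftrightarrow> col G j \<in> span (col G ` S)"
  proof
    assume R: "recoverable C S j"
    show "col G j \<in> span (col G ` S)"
    proof (rule ccontr)
      assume "col G j \<notin> span (col G ` S)"
      from duality[OF fS Sc colc this] obtain w where w: "w \<in> carrier_vec k"
        "\<forall>a\<in>col G ` S. a \<bullet> w = 0" "col G j \<bullet> w = 1" by blast
      have c1: "transpose_mat G *\<^sub>v w \<in> C" using C w by auto
      have c2: "transpose_mat G *\<^sub>v 0\<^sub>v k \<in> C" using C by auto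
      have "\<forall>l\<in>S. (transpose_mat G *\<^sub>v w) $ l = (transpose_mat G *\<^sub>v 0\<^sub>v k) $ l"
        using w S entry colc by auto
      then have "(transpose_mat G *\<^sub>v w) $ j = (transpose_mat G *\<^sub>v 0\<^sub>v k) $ j"
        using R c1 c2 unfolding recoverable_def by blast
      then show False using w j entry colc by auto
    qed
  next
    assume inspan: "col G j \<in> span (col G ` S)"
    show "recoverable C S j"
      unfolding recoverable_def
    proof (intro ballI impI)
      fix c c' assume "c \<in> C" "c' \<in> C" and eq: "\<forall>l\<in>S. c $ l = c' $ l"
      then obtain u u' where u: "u \<in> carrier_vec k" "c = transpose_mat G *\<^sub>v u"
        and u': "u' \<in> carrier_vec k" "c' = transpose_mat G *\<^sub>v u'" using C by auto
      have "u - u' \<in> orthogonal_complement (col G ` S)"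
        unfolding orthogonal_complement_def
      proof (intro CollectI conjI ballI)
        show "u - u' \<in> carrier_vec k" using u u' by auto
        fix y assume "y \<in> col G ` S"
        then obtain l where l: "l \<in> S" "y = col G l" by auto
        have ln: "l < n" using l S by auto
        have "col G l \<bullet> u = col G l \<bullet> u'" using eq l u u' entry[OF ln] by metis
        then have "col G l \<bullet> (u - u') = 0"
          using scalar_prod_minus_distrib[OF colc u(1) u'(1)] by auto
        then show "(u - u') \<bullet> y = 0" using l comm_scalar_prod[OF colc, of "u - u'"] u u' by auto
      qed
      then have "u - u' \<in> orthogonal_complement (span (col G ` S))"
        using in_orthogonal_complement_span[OF Sc] by auto
      then have "(u - u') \<bullet> col G j = 0" using inspan unfolding orthogonal_complement_def by auto
      then have "col G j \<bullet> (u - u') = 0" using comm_scalar_prod[OF colc, of "u - u'"] u u' by auto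
      then have "col G j \<bullet> u = col G j \<bullet> u'"
        using scalar_prod_minus_distrib[OF colc u(1) u'(1)] by auto
      then show "c $ j = c' $ j" using u u' entry j by auto
    qed
  qed
  show ?thesis using r1 r2 dim_span_insert[OF fS Sc colc[of j]] rec by auto
qed



lemma prob_Pi_bernoulli:
  fixes D :: "nat set" and Q :: "nat set \<Rightarrow> bool" and p :: real
  assumes D: "finite D" and p: "0 \<le> p" "p \<le> 1"
  shows "measure_pmf.prob (Pi_pmf D False (\<lambda>_. bernoulli_pmf p)) {f. Q (D - {l. f l})}
       = (\<Sum>E\<in>Pow D. p ^ card E * (1-p) ^ (card D - card E) * (if Q (D - E) then 1 else 0))"
proof -
  define M where "M = Pi_pmf D False (\<lambda>_. bernoulli_pmf p)"
  define F where "F = (\<lambda>E x. x \<in> E) ` Pow D"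
  define A where "A = {f. Q (D - {l. f l})}"
  have sub: "set_pmf M \<subseteq> F"
  proof
    fix f assume "f \<in> set_pmf M"
    then have f: "\<forall>x. x \<notin> D \<longrightarrow> f x = False" using set_Pi_pmf_subset[OF D, of False "\<lambda>_. bernoulli_pmf p"] unfolding M_def by blast
    have "f = (\<lambda>x. x \<in> {l. f l})" by auto
    moreover have "{l. f l} \<in> Pow D" using f by auto
    ultimately show "f \<in> F" unfolding F_def by blast
  qed
  have fF: "finite F" unfolding F_def using D by auto
  have "measure_pmf.prob M A = measure_pmf.prob M (A \<inter> set_pmf M)"
    by (simp add: measure_Int_set_pmf)
  also have "A \<inter> set_pmf M = (A \<inter> F) \<inter> set_pmf M" using sub by auto
  also have "measure_pmf.prob M \<dots> = measure_pmf.prob M (F \<inter> A)"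
    using measure_Int_set_pmf[of M "F \<inter> A"] by (simp add: Int_ac)
  also have "\<dots> = sum (pmf M) (F \<inter> A)" using fF by (simp add: measure_measure_pmf_finite)
  also have "\<dots> = (\<Sum>f\<in>F. if f \<in> A then pmf M f else 0)"
    using sum.inter_restrict[OF fF, of "pmf M" "{f. f \<in> A}"] by simp
  also have "\<dots> = (\<Sum>E\<in>Pow D. if (\<lambda>x. x \<in> E) \<in> A then pmf M (\<lambda>x. x \<in> E) else 0)"
    unfolding F_def
  proof (rule sum.reindex[unfolded comp_def])
    show "inj_on (\<lambda>E x. x \<in> E) (Pow D)"
      by (rule inj_onI) (metis Collect_mem_eq)
  qed
  also have "\<dots> = (\<Sum>E\<in>Pow D. p ^ card E * (1-p) ^ (card D - card E) * (if Q (D - E) then 1 else 0))"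
  proof (rule sum.cong[OF refl])
    fix E assume E: "E \<in> Pow D"
    have fE: "finite E" using E D finite_subset by auto
    have "pmf M (\<lambda>x. x \<in> E) = (\<Prod>x\<in>D. pmf (bernoulli_pmf p) (x \<in> E))"
      unfolding M_def using E by (subst pmf_Pi') (auto simp: D)
    also have "\<dots> = (\<Prod>x\<in>E \<union> (D - E). pmf (bernoulli_pmf p) (x \<in> E))"
      using E by (intro prod.cong) auto
    also have "\<dots> = (\<Prod>x\<in>E. pmf (bernoulli_pmf p) (x \<in> E)) * (\<Prod>x\<in>D - E. pmf (bernoulli_pmf p) (x \<in> E))"
      using fE D by (intro prod.union_disjoint) auto
    also have "(\<Prod>x\<in>E. pmf (bernoulli_pmf p) (x \<in> E)) = (\<Prod>x\<in>E. p)"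
      using p by (intro prod.cong) auto
    also have "(\<Prod>x\<in>D - E. pmf (bernoulli_pmf p) (x \<in> E)) = (\<Prod>x\<in>D - E. 1 - p)"
      using p by (intro prod.cong) auto
    also have "(\<Prod>x\<in>E. p) * (\<Prod>x\<in>D - E. 1 - p) = p ^ card E * (1-p) ^ (card D - card E)"
      using E fE by (simp add: card_Diff_subset)
    finally show "(if (\<lambda>x. x \<in> E) \<in> A then pmf M (\<lambda>x. x \<in> E) else 0) =
      p ^ card E * (1-p) ^ (card D - card E) * (if Q (D - E) then 1 else 0)"
      unfolding A_def by simp
  qed
  finally show ?thesis unfolding M_def A_def .
qed



lemma sum_pairs_out:
  fixes h :: "nat set \<Rightarrow> real"
  assumes N: "finite N"
  shows "(\<Sum>j\<in>N. \<Sum>S\<in>Pow (N - {j}). h S) = (\<Sum>S\<in>Pow N. real (card N - card S) * h S)"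
proof -
  have "(\<Sum>j\<in>N. \<Sum>S\<in>Pow (N - {j}). h S) = (\<Sum>j\<in>N. \<Sum>S\<in>Pow N. if j \<notin> S then h S else 0)"
  proof (rule sum.cong[OF refl])
    fix j assume "j \<in> N"
    have "Pow (N - {j}) = Pow N \<inter> {S. j \<notin> S}" by auto
    then show "(\<Sum>S\<in>Pow (N - {j}). h S) = (\<Sum>S\<in>Pow N. if j \<notin> S then h S else 0)"
      using sum.inter_restrict[of "Pow N" h "{S. j \<notin> S}"] N by simp
  qed
  also have "\<dots> = (\<Sum>S\<in>Pow N. \<Sum>j\<in>N. if j \<notin> S then h S else 0)" by (rule sum.swap)
  also have "\<dots> = (\<Sum>S\<in>Pow N. real (card N - card S) * h S)"
  proof (rule sum.cong[OF refl])
    fix S assume S: "S \<in> Pow N"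
    have "(\<Sum>j\<in>N. if j \<notin> S then h S else 0) = (\<Sum>j\<in>N \<inter> {j. j \<notin> S}. h S)"
      using sum.inter_restrict[of N "\<lambda>_. h S" "{j. j \<notin> S}"] N by simp
    also have "N \<inter> {j. j \<notin> S} = N - S" by auto
    also have "(\<Sum>j\<in>N - S. h S) = real (card (N - S)) * h S" by simp
    also have "card (N - S) = card N - card S" using S N by (simp add: card_Diff_subset finite_subset)
    finally show "(\<Sum>j\<in>N. if j \<notin> S then h S else 0) = real (card N - card S) * h S" .
  qed
  finally show ?thesis .
qed

lemma sum_pairs_in:
  fixes a :: "nat \<Rightarrow> real" and r :: "nat set \<Rightarrow> real"
  assumes N: "finite N"
  shows "(\<Sum>j\<in>N. \<Sum>S\<in>Pow (N - {j}). a (card S) * r (insert j S))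
       = (\<Sum>T\<in>Pow N. real (card T) * (a (card T - 1) * r T))"
proof -
  have "(\<Sum>j\<in>N. \<Sum>S\<in>Pow (N - {j}). a (card S) * r (insert j S))
     = (\<Sum>j\<in>N. \<Sum>T\<in>Pow N. if j \<in> T then a (card T - 1) * r T else 0)"
  proof (rule sum.cong[OF refl])
    fix j assume j: "j \<in> N"
    have "(\<Sum>S\<in>Pow (N - {j}). a (card S) * r (insert j S)) = (\<Sum>T\<in>Pow N \<inter> {T. j \<in> T}. a (card T - 1) * r T)"
    proof (rule sum.reindex_bij_witness[where i = "\<lambda>T. T - {j}" and j = "insert j"])
      fix S assume S: "S \<in> Pow (N - {j})"
      then have fS: "finite S" using N finite_subset by auto
      show "insert j S - {j} = S" using S by auto
      show "insert j S \<in> Pow N \<inter> {T. j \<in> T}" using S j by auto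
      have "j \<notin> S" using S by auto
      then have "card (insert j S) - 1 = card S" using fS by simp
      then show "a (card (insert j S) - 1) * r (insert j S) = a (card S) * r (insert j S)"
        by simp
    next
      fix T assume T: "T \<in> Pow N \<inter> {T. j \<in> T}"
      show "insert j (T - {j}) = T" using T by auto
      show "T - {j} \<in> Pow (N - {j})" using T by auto
    qed
    also have "\<dots> = (\<Sum>T\<in>Pow N. if j \<in> T then a (card T - 1) * r T else 0)"
      using sum.inter_restrict[of "Pow N" "\<lambda>T. a (card T - 1) * r T" "{T. j \<in> T}"] N by simp
    finally show "(\<Sum>S\<in>Pow (N - {j}). a (card S) * r (insert j S)) = (\<Sum>T\<in>Pow N. if j \<in> T then a (card T - 1) * r T else 0)" .
  qed
  also have "\<dots> = (\<Sum>T\<in>Pow N. \<Sum>j\<in>N. if j \<in> T then a (card T - 1) * r T else 0)" by (rule sum.swap)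
  also have "\<dots> = (\<Sum>T\<in>Pow N. real (card T) * (a (card T - 1) * r T))"
  proof (rule sum.cong[OF refl])
    fix T assume T: "T \<in> Pow N"
    have "(\<Sum>j\<in>N. if j \<in> T then a (card T - 1) * r T else 0) = (\<Sum>j\<in>N \<inter> {j. j \<in> T}. a (card T - 1) * r T)"
      using sum.inter_restrict[of N "\<lambda>_. a (card T - 1) * r T" "{j. j \<in> T}"] N by simp
    also have "N \<inter> {j. j \<in> T} = T" using T by auto
    finally show "(\<Sum>j\<in>N. if j \<in> T then a (card T - 1) * r T else 0) = real (card T) * (a (card T - 1) * r T)" by simp
  qed
  finally show ?thesis .
qed

lemma sum_Pow_compl:
  fixes g :: "nat set \<Rightarrow> real"
  assumes D: "finite D"
  shows "(\<Sum>E\<in>Pow D. g (D - E)) = (\<Sum>S\<in>Pow D. g S)"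
  by (rule sum.reindex_bij_witness[where i = "\<lambda>S. D - S" and j = "\<lambda>S. D - S"]) auto

lemma sum_Pow_by_card:
  fixes F :: "nat set \<Rightarrow> real"
  assumes N: "finite N"
  shows "(\<Sum>T\<in>Pow N. F T) = (\<Sum>g\<in>{0..card N}. \<Sum>T\<in>{T. T \<subseteq> N \<and> card T = g}. F T)"
proof -
  have "card ` Pow N \<subseteq> {0..card N}" using N by (auto intro: card_mono)
  from sum.group[OF _ _ this, of F] N
  show ?thesis by (simp add: Pow_def)
qed



theorem proposition1:
  fixes G :: "bit mat" and C :: "bit vec set" and n k :: nat and p :: real
  assumes "generator_matrix G k n C"
    and "no_idle_bits C n"
    and "min_dist_ge C n 2"
    and "0 \<le> p" and "p \<le> 1"
  shows "nonrec_prob C n p =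
    (1 / real n) * (\<Sum>t<n. p ^ t * (1 - p) ^ (n - 1 - t) *
       (real (n - t) * real (info_fun G (n - t)) - real (t + 1) * real (info_fun G (n - 1 - t))))"
proof -
  have G: "G \<in> carrier_mat k n" and C: "C = {transpose_mat G *\<^sub>v u | u. u \<in> carrier_vec k}"
    using assms(1) unfolding generator_matrix_def by auto
  have p: "0 \<le> p" "p \<le> 1" using assms by auto
  define N where "N = {0..<n}"
  have fN: "finite N" and cN: "card N = n" unfolding N_def by auto
  define r where "r T = real (vec_space.rank k (submatrix G UNIV T))" for T
  define a where "a s = p ^ (n - 1 - s) * (1 - p) ^ s" for s
  define E where "E g = (\<Sum>T\<in>{T. T \<subseteq> N \<and> card T = g}. r T)" for g
  have infoE: "real (info_fun G g) = E g" for g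
    unfolding info_fun_def E_def r_def N_def using G by (simp add: of_nat_sum)
  have probj: "measure_pmf.prob (erasure_pmf n j p)
        {f. \<not> recoverable C ({0..<n} - ({l. f l} \<union> {j})) j}
      = (\<Sum>S\<in>Pow (N - {j}). a (card S) * (r (insert j S) - r S))" if j: "j < n" for j
  proof -
    define D where "D = N - {j}"
    have fD: "finite D" unfolding D_def using fN by auto
    have cD: "card D = n - 1" unfolding D_def using cN j N_def fN by (simp add: card_Diff_subset)
    have set_eq: "{f. \<not> recoverable C ({0..<n} - ({l. f l} \<union> {j})) j}
        = {f. \<not> recoverable C (D - {l. f l}) j}"
    proof -
      have "({0..<n} - ({l. f l} \<union> {j})) = ({0..<n} - {j} - {l. f l})" for f :: "nat \<Rightarrow> bool" by auto
      then show ?thesis unfolding D_def N_def by simp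
    qed
    have "measure_pmf.prob (erasure_pmf n j p) {f. \<not> recoverable C ({0..<n} - ({l. f l} \<union> {j})) j}
      = (\<Sum>E\<in>Pow D. p ^ card E * (1-p) ^ (card D - card E) *
            (if \<not> recoverable C (D - E) j then 1 else 0))"
      unfolding set_eq erasure_pmf_def D_def N_def
      by (rule prob_Pi_bernoulli[OF _ p, of "{0..<n} - {j}" "\<lambda>S. \<not> recoverable C S j"]) auto
    also have "\<dots> = (\<Sum>E\<in>Pow D. (\<lambda>S. a (card S) * (if \<not> recoverable C S j then 1 else 0)) (D - E))"
    proof (rule sum.cong[OF refl])
      fix E0 assume E0: "E0 \<in> Pow D"
      have c1: "card (D - E0) = card D - card E0" using E0 fD by (simp add: card_Diff_subset finite_subset)
      have c2: "card E0 \<le> card D" using E0 fD by (simp add: card_mono)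
      have "n - 1 - card (D - E0) = card E0" using c1 c2 cD by simp
      then show "p ^ card E0 * (1-p) ^ (card D - card E0) * (if \<not> recoverable C (D - E0) j then 1 else 0)
          = (\<lambda>S. a (card S) * (if \<not> recoverable C S j then 1 else 0)) (D - E0)"
        unfolding a_def using c1 by simp
    qed
    also have "\<dots> = (\<Sum>S\<in>Pow D. a (card S) * (if \<not> recoverable C S j then 1 else 0))"
      by (rule sum_Pow_compl[OF fD])
    also have "\<dots> = (\<Sum>S\<in>Pow D. a (card S) * (r (insert j S) - r S))"
    proof (rule sum.cong[OF refl])
      fix S assume S: "S \<in> Pow D"
      then have "S \<subseteq> {0..<n}" unfolding D_def N_def by auto
      from rank_insert_recoverable[OF G C this j]
      show "a (card S) * (if \<not> recoverable C S j then 1 else 0) = a (card S) * (r (insert j S) - r S)"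
        unfolding r_def by auto
    qed
    finally show ?thesis unfolding D_def .
  qed
  have lhs: "(\<Sum>j<n. measure_pmf.prob (erasure_pmf n j p)
        {f. \<not> recoverable C ({0..<n} - ({l. f l} \<union> {j})) j})
      = (\<Sum>T\<in>Pow N. real (card T) * (a (card T - 1) * r T)) -
        (\<Sum>S\<in>Pow N. real (card N - card S) * (a (card S) * r S))"
  proof -
    have "(\<Sum>j<n. measure_pmf.prob (erasure_pmf n j p)
        {f. \<not> recoverable C ({0..<n} - ({l. f l} \<union> {j})) j})
      = (\<Sum>j\<in>N. \<Sum>S\<in>Pow (N - {j}). a (card S) * (r (insert j S) - r S))"
    proof (rule sum.cong)
      show "{..<n} = N" unfolding N_def by auto
    next
      fix j assume "j \<in> N"
      then have "j < n" unfolding N_def by auto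
      then show "measure_pmf.prob (erasure_pmf n j p)
        {f. \<not> recoverable C ({0..<n} - ({l. f l} \<union> {j})) j}
        = (\<Sum>S\<in>Pow (N - {j}). a (card S) * (r (insert j S) - r S))" by (rule probj)
    qed
    also have "\<dots> = (\<Sum>j\<in>N. \<Sum>S\<in>Pow (N - {j}). a (card S) * r (insert j S)) -
                    (\<Sum>j\<in>N. \<Sum>S\<in>Pow (N - {j}). a (card S) * r S)"
      by (simp add: right_diff_distrib sum_subtractf)
    also have "\<dots> = (\<Sum>T\<in>Pow N. real (card T) * (a (card T - 1) * r T)) -
        (\<Sum>S\<in>Pow N. real (card N - card S) * (a (card S) * r S))"
      using sum_pairs_in[OF fN, of a r] sum_pairs_out[OF fN, of "\<lambda>S. a (card S) * r S"] by simp
    finally show ?thesis .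
  qed
  define f1 where "f1 g = real g * a (g - 1) * E g" for g
  define f2 where "f2 g = real (n - g) * a g * E g" for g
  have X1: "(\<Sum>T\<in>Pow N. real (card T) * (a (card T - 1) * r T)) = (\<Sum>g\<le>n. f1 g)"
    unfolding sum_Pow_by_card[OF fN] cN atLeast0AtMost f1_def E_def
    by (rule sum.cong[OF refl]) (simp add: sum_distrib_left mult.assoc)
  have X2: "(\<Sum>S\<in>Pow N. real (card N - card S) * (a (card S) * r S)) = (\<Sum>g\<le>n. f2 g)"
    unfolding sum_Pow_by_card[OF fN] cN atLeast0AtMost f2_def E_def
    by (rule sum.cong[OF refl]) (simp add: sum_distrib_left mult.assoc)
  have R1: "(\<Sum>t<n. p ^ t * (1 - p) ^ (n - 1 - t) * (real (n - t) * real (info_fun G (n - t))))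
      = (\<Sum>g\<le>n. f1 g)"
  proof -
    have "(\<Sum>t<n. p ^ t * (1 - p) ^ (n - 1 - t) * (real (n - t) * real (info_fun G (n - t))))
        = (\<Sum>t<n. f1 (Suc (n - Suc t)))"
    proof (rule sum.cong[OF refl])
      fix t assume "t \<in> {..<n}"
      then have t: "t < n" by auto
      then have e: "Suc (n - Suc t) = n - t" "n - t - 1 = n - 1 - t" "n - 1 - (n - 1 - t) = t" by auto
      show "p ^ t * (1 - p) ^ (n - 1 - t) * (real (n - t) * real (info_fun G (n - t))) = f1 (Suc (n - Suc t))"
        unfolding e f1_def a_def infoE by simp
    qed
    also have "\<dots> = (\<Sum>t<n. f1 (Suc t))" by (rule sum.nat_diff_reindex)
    also have "\<dots> = (\<Sum>g\<le>n. f1 g)" using sum.atMost_shift[of f1 n] by (simp add: f1_def)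
    finally show ?thesis .
  qed
  have R2: "(\<Sum>t<n. p ^ t * (1 - p) ^ (n - 1 - t) * (real (t + 1) * real (info_fun G (n - 1 - t))))
      = (\<Sum>g\<le>n. f2 g)"
  proof -
    have "(\<Sum>t<n. p ^ t * (1 - p) ^ (n - 1 - t) * (real (t + 1) * real (info_fun G (n - 1 - t))))
        = (\<Sum>t<n. f2 (n - Suc t))"
    proof (rule sum.cong[OF refl])
      fix t assume "t \<in> {..<n}"
      then have t: "t < n" by auto
      then have e: "n - Suc t = n - 1 - t" "n - (n - 1 - t) = t + 1" "n - 1 - (n - 1 - t) = t" by auto
      show "p ^ t * (1 - p) ^ (n - 1 - t) * (real (t + 1) * real (info_fun G (n - 1 - t))) = f2 (n - Suc t)"
        unfolding e f2_def a_def infoE by simp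
    qed
    also have "\<dots> = (\<Sum>t<n. f2 t)" by (rule sum.nat_diff_reindex)
    also have "\<dots> = (\<Sum>g\<le>n. f2 g)" by (simp add: lessThan_Suc_atMost[symmetric] f2_def)
    finally show ?thesis .
  qed
  show ?thesis
    unfolding nonrec_prob_def lhs X1 X2
    by (simp add: right_diff_distrib sum_subtractf R1[symmetric] R2[symmetric] algebra_simps)
qed

end
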